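(* Let $v\in S$ be a point with at least one irrational coordinate, and suppose there is $m\ge1$ such that the tail $\mathbb{X}_{a_m},\mathbb{X}_{a_{m+1}},\dots$ of its itinerary has the property that its non-$\mathbb{A}$-type symbols alternate in type between $\mathbb{B}$ and $\mathbb{C}$ (starting with either type, or there are none). Then $G^{m-1}(v)$ lies in the union of the faces $\{z=0\}$ and $\{y=z\}$ of $S$.
   Context: Let $S = \{(x,y,z)\in\mathbb{R}^3 : 0\le z\le y\le x\le 1\}$. For integers $n\ge1$ define $\mathbb{A}_n = \{\frac1{n+1} < x \le \frac1n,\ 0\le z\le y\le 1-nx\}$, $\mathbb{B}_n = \{0\le z\le 1-nx < y \le x\}$, $\mathbb{C}_n = \{1-nx < z \le y \le x \le \frac1n\}$; together with $\{(0,0,0)\}$ they partition $S$. The 3-dimensional Gauss map $G:S\to S$ is $G(0,0,0)=(0,0,0)$, $G(x,y,z)=\left(\frac1x-n,\frac yx,\frac zx\right)$ on $\mathbb{A}_n$, $G(x,y,z)=\left(\frac{1-y}{x}-n+1,\frac{x-y+z}{x},\frac{x-y}{x}\right)$ on $\mathbb{B}_n$, $G(x,y,z)=\left(\frac{1-z}{x}-n+1,\frac{x-z}{x},\frac{y-z}{x}\right)$ on $\mathbb{C}_n$. For a point $v$ whose forward orbit never hits the origin, its itinerary is the sequence $\mathbb{X}_{a_1},\mathbb{X}_{a_2},\dots$ ($\mathbb{X}\in\{\mathbb{A},\mathbb{B},\mathbb{C}\}$) with $G^{k-1}(v)\in\mathbb{X}_{a_k}$; a symbol $\mathbb{X}_a$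 is "of type $\mathbb{X}$". *)

theory Defs
  imports Complex_Main
begin

type_synonym pt = "real \<times> real \<times> real"

definition simplexS :: "pt set" where
  "simplexS = {(x,y,z). 0 \<le> z \<and> z \<le> y \<and> y \<le> x \<and> x \<le> 1}"

definition regA :: "nat \<Rightarrow> pt set" where
  "regA n = {(x,y,z). 1 / real (n+1) < x \<and> x \<le> 1 / real n \<and>
                      0 \<le> z \<and> z \<le> y \<and> y \<le> 1 - real n * x}"

definition regB :: "nat \<Rightarrow> pt set" where
  "regB n = {(x,y,z). 0 \<le> z \<and> z \<le> 1 - real n * x \<and> 1 - real n * x < y \<and> y \<le> x}"

definition regC :: "nat \<Rightarrow> pt set" where
  "regC n = {(x,y,z). 1 - real n * x < z \<and> z \<le> y \<and> y \<le> x \<and> x \<le> 1 / real n}"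

text \<open>The 3-dimensional Gauss map. The index n is the unique n \<ge> 1 of the piece
  containing the point (the pieces partition S).\<close>
definition gaussG :: "pt \<Rightarrow> pt" where
  "gaussG p = (case p of (x,y,z) \<Rightarrow>
     if p = (0,0,0) then (0,0,0)
     else if \<exists>n\<ge>1. p \<in> regA n then
       (let n = (SOME n. n \<ge> 1 \<and> p \<in> regA n) in (1/x - real n, y/x, z/x))
     else if \<exists>n\<ge>1. p \<in> regB n then
       (let n = (SOME n. n \<ge> 1 \<and> p \<in> regB n) in
          ((1-y)/x - real n + 1, (x-y+z)/x, (x-y)/x))
     else if \<exists>n\<ge>1. p \<in> regC n then
       (let n = (SOME n. n \<ge> 1 \<and> p \<in> regC n) in
          ((1-z)/x - real n + 1, (x-z)/x, (y-z)/x))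
     else (0,0,0))"

datatype symtype = TypeA | TypeB | TypeC | TypeO

definition ptype :: "pt \<Rightarrow> symtype" where
  "ptype p = (if \<exists>n\<ge>1. p \<in> regA n then TypeA
              else if \<exists>n\<ge>1. p \<in> regB n then TypeB
              else if \<exists>n\<ge>1. p \<in> regC n then TypeC else TypeO)"

definition itin_type :: "pt \<Rightarrow> nat \<Rightarrow> symtype" where
  "itin_type v k = ptype ((gaussG ^^ (k - 1)) v)"

definition tail_alternates :: "pt \<Rightarrow> nat \<Rightarrow> bool" where
  "tail_alternates v m \<longleftrightarrow>
     (\<forall>k\<ge>m. itin_type v k \<in> {TypeA, TypeB, TypeC}) \<and>
     (\<forall>i j. m \<le> i \<and> i < j \<and> itin_type v i \<noteq> TypeA \<and> itin_type v j \<noteq> TypeA \<and>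
            (\<forall>l. i < l \<and> l < j \<longrightarrow> itin_type v l = TypeA)
            \<longrightarrow> itin_type v i \<noteq> itin_type v j)"

end

theory Submission imports Defs begin
lemma nx_uniq:
  assumes "(n::nat) \<ge> 1" "k \<ge> 1" "real n * x \<le> 1" "1 < (real n + 1) * x"
    "real k * x \<le> 1" "1 < (real k + 1) * x"
  shows "n = k"
proof -
  have h: "real n + 1 > 0" by simp
  have x: "x > 0" using assms(4) h by (smt (verit) zero_less_mult_iff)
  have "\<not> n \<ge> k + 1"
  proof
    assume "n \<ge> k+1"
    then have "real n \<ge> real k + 1" by simp
    then have "real n * x \<ge> (real k + 1) * x" using x by (simp add: mult_right_mono)
    then show False using assms by linarith
  qed
  moreover have "\<not> k \<ge> n + 1"
  proof
    assume "k \<ge> n+1"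
    then have "real k \<ge> real n + 1" by simp
    then have "real k * x \<ge> (real n + 1) * x" using x by (simp add: mult_right_mono)
    then show False using assms by linarith
  qed
  ultimately show ?thesis by linarith
qed

lemma bndA:
  assumes "(x,y,z) \<in> regA n" "n \<ge> 1"
  shows "real n * x \<le> 1 \<and> 1 < (real n + 1) * x \<and> 0 \<le> z \<and> z \<le> y \<and> y \<le> 1 - real n * x \<and> x > 0"
proof -
  have n: "real n > 0" using assms(2) by simp
  have a: "1 / real (n+1) < x" "x \<le> 1 / real n" "0 \<le> z" "z \<le> y" "y \<le> 1 - real n * x"
    using assms(1) by (auto simp: regA_def)
  have "1 < (real n + 1) * x" using a(1) by (simp add: field_simps)
  moreover have "real n * x \<le> 1" using a(2) n by (simp add: field_simps)
  ultimately show ?thesis using a n by (smt (verit) mult_nonneg_nonpos of_nat_0_le_iff)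
qed

lemma bndB:
  assumes "(x,y,z) \<in> regB n" "n \<ge> 1"
  shows "real n * x \<le> 1 \<and> 1 < (real n + 1) * x \<and> 0 \<le> z \<and> z \<le> 1 - real n * x \<and> 1 - real n * x < y \<and> y \<le> x \<and> x > 0"
proof -
  have a: "0 \<le> z" "z \<le> 1 - real n * x" "1 - real n * x < y" "y \<le> x"
    using assms(1) by (auto simp: regB_def)
  then show ?thesis by (auto simp: algebra_simps)
qed

lemma bndC:
  assumes "(x,y,z) \<in> regC n" "n \<ge> 1"
  shows "real n * x \<le> 1 \<and> 1 < (real n + 1) * x \<and> 0 < z \<and> 1 - real n * x < z \<and> z \<le> y \<and> y \<le> x \<and> x \<le> 1 \<and> x > 0"
proof -
  have n: "real n \<ge> 1" using assms(2) by simp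
  have a: "1 - real n * x < z" "z \<le> y" "y \<le> x" "x \<le> 1 / real n"
    using assms(1) by (auto simp: regC_def)
  have b: "real n * x \<le> 1" using a(4) n by (simp add: field_simps)
  have "x \<le> 1" using a(4) n by (smt (verit) divide_le_eq_1 le_divide_eq_1)
  then show ?thesis using a b n by (auto simp: algebra_simps)
qed

lemma AB_disj: "n \<ge> 1 \<Longrightarrow> k \<ge> 1 \<Longrightarrow> p \<in> regA n \<Longrightarrow> p \<in> regB k \<Longrightarrow> False"
  apply (cases p) using bndA bndB nx_uniq by (metis not_less)
lemma AC_disj: "n \<ge> 1 \<Longrightarrow> k \<ge> 1 \<Longrightarrow> p \<in> regA n \<Longrightarrow> p \<in> regC k \<Longrightarrow> False"
  apply (cases p) using bndA bndC nx_uniq by (smt (verit))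
lemma BC_disj: "n \<ge> 1 \<Longrightarrow> k \<ge> 1 \<Longrightarrow> p \<in> regB n \<Longrightarrow> p \<in> regC k \<Longrightarrow> False"
  apply (cases p) using bndB bndC nx_uniq by (smt (verit))

lemma someA: "n \<ge> 1 \<Longrightarrow> p \<in> regA n \<Longrightarrow> (SOME k. k \<ge> 1 \<and> p \<in> regA k) = n"
  apply (rule some_equality) apply simp
  apply (cases p) using bndA nx_uniq by metis
lemma someB: "n \<ge> 1 \<Longrightarrow> p \<in> regB n \<Longrightarrow> (SOME k. k \<ge> 1 \<and> p \<in> regB k) = n"
  apply (rule some_equality) apply simp
  apply (cases p) using bndB nx_uniq by metis
lemma someC: "n \<ge> 1 \<Longrightarrow> p \<in> regC n \<Longrightarrow> (SOME k. k \<ge> 1 \<and> p \<in> regC k) = n"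
  apply (rule some_equality) apply simp
  apply (cases p) using bndC nx_uniq by metis

lemma stepA: assumes "n \<ge> 1" "(x,y,z) \<in> regA n"
  shows "gaussG (x,y,z) = (1/x - real n, y/x, z/x)" "ptype (x,y,z) = TypeA"
proof -
  have "x > 0" using bndA assms by blast
  then show "gaussG (x,y,z) = (1/x - real n, y/x, z/x)"
    using assms someA[OF assms] unfolding gaussG_def by (auto simp: Let_def)
  show "ptype (x,y,z) = TypeA" using assms unfolding ptype_def by auto
qed

lemma stepB: assumes "n \<ge> 1" "(x,y,z) \<in> regB n"
  shows "gaussG (x,y,z) = ((1-y)/x - real n + 1, (x-y+z)/x, (x-y)/x)" "ptype (x,y,z) = TypeB"
proof -
  have "x > 0" using bndB assms by blast
  moreover have "\<not> (\<exists>k\<ge>1. (x,y,z) \<in> regA k)" using AB_disj assms by blast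
  ultimately show "gaussG (x,y,z) = ((1-y)/x - real n + 1, (x-y+z)/x, (x-y)/x)"
    "ptype (x,y,z) = TypeB"
    using assms someB[OF assms] unfolding gaussG_def ptype_def by (auto simp: Let_def)
qed

lemma stepC: assumes "n \<ge> 1" "(x,y,z) \<in> regC n"
  shows "gaussG (x,y,z) = ((1-z)/x - real n + 1, (x-z)/x, (y-z)/x)" "ptype (x,y,z) = TypeC"
proof -
  have "x > 0" using bndC assms by blast
  moreover have "\<not> (\<exists>k\<ge>1. (x,y,z) \<in> regA k)" using AC_disj assms by blast
  moreover have "\<not> (\<exists>k\<ge>1. (x,y,z) \<in> regB k)" using BC_disj assms by blast
  ultimately show "gaussG (x,y,z) = ((1-z)/x - real n + 1, (x-z)/x, (y-z)/x)"
    "ptype (x,y,z) = TypeC"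
    using assms someC[OF assms] unfolding gaussG_def ptype_def by (auto simp: Let_def)
qed

lemma qA: assumes "ptype (x,y,z) = TypeA" "gaussG (x,y,z) = (x',y',z')"
  shows "(0<z \<longrightarrow> 0<z' \<and> 1/z' \<le> 1/z - 1) \<and> (0 < y-z \<longrightarrow> 0 < y'-z' \<and> 1/(y'-z') \<le> 1/(y-z) - 1)"
proof -
  obtain n where n: "n \<ge> 1" "(x,y,z) \<in> regA n" using assms(1) unfolding ptype_def by (auto split: if_splits)
  note b = bndA[OF n(2) n(1)]
  have e: "y' = y/x" "z' = z/x" using stepA(1)[OF n] assms(2) by auto
  have x: "x > 0" using b by blast
  have le: "y \<le> 1 - x" using b n(1) x
    by (smt (verit, best) mult_le_cancel_right1 of_nat_1 of_nat_le_iff)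
  show ?thesis
  proof (intro conjI impI)
    assume z: "0 < z"
    show "0 < z'" using e x z by simp
    have "1/z' = x/z" using e by simp
    also have "\<dots> \<le> 1/z - 1" using z le b by (simp add: field_simps)
    finally show "1/z' \<le> 1/z - 1" .
  next
    assume z: "0 < y - z"
    have d: "y' - z' = (y-z)/x" using e by (simp add: diff_divide_distrib)
    show "0 < y' - z'" using d x z by simp
    have "1/(y'-z') = x/(y-z)" using d by simp
    also have "\<dots> \<le> (1 - (y-z))/(y-z)" using z le b by (intro divide_right_mono) auto
    also have "\<dots> = 1/(y-z) - 1" using z by (simp add: diff_divide_distrib)
    finally show "1/(y'-z') \<le> 1/(y-z) - 1" .
  qed
qed

lemma qB: assumes "ptype (x,y,z) = TypeB" "gaussG (x,y,z) = (x',y',z')" "0 < z"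
  shows "0 < y'-z' \<and> 1/(y'-z') \<le> 1/z - 1"
proof -
  obtain n where n: "n \<ge> 1" "(x,y,z) \<in> regB n" using assms(1) unfolding ptype_def
    by (auto split: if_splits)
  note b = bndB[OF n(2) n(1)]
  have e: "y' = (x-y+z)/x" "z' = (x-y)/x" using stepB(1)[OF n] assms(2) by auto
  have x: "x > 0" using b by blast
  have le: "z \<le> 1 - x" using b n(1) x
    by (smt (verit, best) mult_le_cancel_right1 of_nat_1 of_nat_le_iff)
  have d: "y' - z' = z/x" using e x by (simp add: field_simps)
  have "1/(y'-z') = x/z" using d by simp
  also have "\<dots> \<le> 1/z - 1" using assms(3) le by (simp add: field_simps)
  finally show ?thesis using d x assms(3) by simp
qed

lemma qC: assumes "ptype (x,y,z) = TypeC" "gaussG (x,y,z) = (x',y',z')" "0 < y - z"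
  shows "0 < z' \<and> 1/z' \<le> 1/(y-z)"
proof -
  obtain n where n: "n \<ge> 1" "(x,y,z) \<in> regC n" using assms(1) unfolding ptype_def
    by (auto split: if_splits)
  note b = bndC[OF n(2) n(1)]
  have e: "z' = (y-z)/x" using stepC(1)[OF n] assms(2) by auto
  have x: "x > 0" "x \<le> 1" using b by blast+
  have "1/z' = x/(y-z)" using e by simp
  also have "\<dots> \<le> 1/(y-z)" using assms(3) x by (intro divide_right_mono) auto
  finally show ?thesis using e x assms(3) by simp
qed

lemma qO: assumes "ptype (x,y,z) \<noteq> TypeO" shows "0 \<le> z \<and> z \<le> y"
proof -
  consider "\<exists>n\<ge>1. (x,y,z) \<in> regA n" | "\<exists>n\<ge>1. (x,y,z) \<in> regB n" | "\<exists>n\<ge>1. (x,y,z) \<in> regC n"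
    using assms unfolding ptype_def by (auto split: if_splits)
  then show ?thesis
  proof cases
    case 1 then show ?thesis using bndA by blast
  next
    case 2 then obtain n where "n \<ge> 1" "(x,y,z) \<in> regB n" by blast
    from bndB[OF this(2,1)] show ?thesis by linarith
  next
    case 3 then obtain n where "n \<ge> 1" "(x,y,z) \<in> regC n" by blast
    from bndC[OF this(2,1)] show ?thesis by linarith
  qed
qed

definition TT :: "pt \<Rightarrow> nat \<Rightarrow> pt" where "TT v l = (gaussG ^^ l) v"
definition ty :: "pt \<Rightarrow> nat \<Rightarrow> symtype" where "ty v l = ptype (TT v l)"
definition nxt_not :: "pt \<Rightarrow> symtype \<Rightarrow> nat \<Rightarrow> bool" where
  "nxt_not v s t \<longleftrightarrow> (\<forall>j\<ge>t. (\<forall>l. t \<le> l \<and> l < j \<longrightarrow> ty v l = TypeA) \<longrightarrow> ty v j \<noteq> s)"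
definition InvZ :: "pt \<Rightarrow> nat \<Rightarrow> real \<Rightarrow> bool" where
  "InvZ v t r \<longleftrightarrow> 0 < snd (snd (TT v t)) \<and> 1 / snd (snd (TT v t)) \<le> r \<and> nxt_not v TypeC t"
definition InvY :: "pt \<Rightarrow> nat \<Rightarrow> real \<Rightarrow> bool" where
  "InvY v t r \<longleftrightarrow> 0 < fst (snd (TT v t)) - snd (snd (TT v t)) \<and>
     1 / (fst (snd (TT v t)) - snd (snd (TT v t))) \<le> r \<and> nxt_not v TypeB t"

lemma TT_Suc: "TT v (Suc t) = gaussG (TT v t)" by (simp add: TT_def)

lemma ty_ok: "tail_alternates v m \<Longrightarrow> m \<ge> 1 \<Longrightarrow> m - 1 \<le> t \<Longrightarrow> ty v t \<in> {TypeA, TypeB, TypeC}"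
proof -
  assume a: "tail_alternates v m" "m \<ge> 1" "m - 1 \<le> t"
  have "m \<le> Suc t" using a by simp
  then have "itin_type v (Suc t) \<in> {TypeA, TypeB, TypeC}" using a(1) unfolding tail_alternates_def by blast
  then show ?thesis by (simp add: itin_type_def ty_def TT_def)
qed

lemma alt0:
  assumes "tail_alternates v m" "m \<ge> 1" "m - 1 \<le> i" "i < j" "ty v i \<noteq> TypeA" "ty v j \<noteq> TypeA"
    "\<forall>l. i < l \<and> l < j \<longrightarrow> ty v l = TypeA"
  shows "ty v i \<noteq> ty v j"
proof -
  have it: "itin_type v (Suc k) = ty v k" for k by (simp add: itin_type_def ty_def TT_def)
  have "\<forall>l. Suc i < l \<and> l < Suc j \<longrightarrow> itin_type v l = TypeA"
  proof (intro allI impI)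
    fix l assume l: "Suc i < l \<and> l < Suc j"
    then obtain k where k: "l = Suc k" by (cases l) auto
    then show "itin_type v l = TypeA" using assms(7) l it by auto
  qed
  moreover have "m \<le> Suc i" using assms(2,3) by simp
  moreover have H: "\<And>i j. m \<le> i \<Longrightarrow> i<j \<Longrightarrow> itin_type v i \<noteq> TypeA \<Longrightarrow> itin_type v j \<noteq> TypeA \<Longrightarrow>
     (\<forall>l. i < l \<and> l < j \<longrightarrow> itin_type v l = TypeA) \<Longrightarrow> itin_type v i \<noteq> itin_type v j"
    using assms(1) unfolding tail_alternates_def by blast
  ultimately have "itin_type v (Suc i) \<noteq> itin_type v (Suc j)"
    using assms(4,5,6) it by (intro H) auto
  then show ?thesis using it by simp
qed

lemma N1: "nxt_not v s t \<Longrightarrow> ty v t \<noteq> s" unfolding nxt_not_def by auto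
lemma N2: "nxt_not v s t \<Longrightarrow> ty v t = TypeA \<Longrightarrow> nxt_not v s (Suc t)"
  unfolding nxt_not_def by (metis Suc_leD le_antisym not_less_eq_eq)

lemma N3:
  assumes "tail_alternates v m" "m \<ge> 1" "m - 1 \<le> t" "ty v t = s" "s \<noteq> TypeA"
  shows "nxt_not v s (Suc t)"
  unfolding nxt_not_def
proof (intro allI impI notI)
  fix j assume j: "Suc t \<le> j" "\<forall>l. Suc t \<le> l \<and> l < j \<longrightarrow> ty v l = TypeA" "ty v j = s"
  have "ty v t \<noteq> ty v j"
    by (rule alt0[OF assms(1,2,3)]) (use j assms in auto)
  then show False using j assms by simp
qed

lemma InvY_mono: "InvY v t r \<Longrightarrow> r \<le> r' \<Longrightarrow> InvY v t r'" unfolding InvY_def by auto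
lemma InvZ_mono: "InvZ v t r \<Longrightarrow> r \<le> r' \<Longrightarrow> InvZ v t r'" unfolding InvZ_def by auto

lemma SZ:
  assumes "tail_alternates v m" "m \<ge> 1" "m - 1 \<le> t" "InvZ v t r"
  shows "InvZ v (Suc t) (r - 1) \<or> InvY v (Suc t) (r - 1)"
proof -
  obtain x y z where p: "TT v t = (x,y,z)" by (cases "TT v t") auto
  obtain x' y' z' where q: "TT v (Suc t) = (x',y',z')" by (cases "TT v (Suc t)") auto
  have g: "gaussG (x,y,z) = (x',y',z')" using p q TT_Suc by metis
  have I: "0 < z" "1/z \<le> r" "nxt_not v TypeC t" using assms(4) p unfolding InvZ_def by auto
  have "ty v t \<noteq> TypeC" using N1 I(3) by blast
  then consider "ty v t = TypeA" | "ty v t = TypeB" using ty_ok[OF assms(1-3)] by auto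
  then show ?thesis
  proof cases
    case 1
    then have "0<z' \<and> 1/z' \<le> 1/z - 1" using qA[OF _ g] I p unfolding ty_def by auto
    moreover have "nxt_not v TypeC (Suc t)" using N2 I(3) 1 by blast
    ultimately have "InvZ v (Suc t) (r-1)" using q I unfolding InvZ_def by auto
    then show ?thesis ..
  next
    case 2
    then have "0 < y'-z' \<and> 1/(y'-z') \<le> 1/z - 1" using qB[OF _ g] I p unfolding ty_def by auto
    moreover have "nxt_not v TypeB (Suc t)" using N3[OF assms(1-3) 2] by simp
    ultimately have "InvY v (Suc t) (r-1)" using q I unfolding InvY_def by auto
    then show ?thesis ..
  qed
qed

lemma SY:
  assumes "tail_alternates v m" "m \<ge> 1" "m - 1 \<le> t" "InvY v t r"
  shows "(ty v t = TypeA \<and> InvY v (Suc t) (r - 1)) \<or> (ty v t = TypeC \<and> InvZ v (Suc t) r)"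
proof -
  obtain x y z where p: "TT v t = (x,y,z)" by (cases "TT v t") auto
  obtain x' y' z' where q: "TT v (Suc t) = (x',y',z')" by (cases "TT v (Suc t)") auto
  have g: "gaussG (x,y,z) = (x',y',z')" using p q TT_Suc by metis
  have I: "0 < y - z" "1/(y-z) \<le> r" "nxt_not v TypeB t" using assms(4) p unfolding InvY_def by auto
  have "ty v t \<noteq> TypeB" using N1 I(3) by blast
  then consider "ty v t = TypeA" | "ty v t = TypeC" using ty_ok[OF assms(1-3)] by auto
  then show ?thesis
  proof cases
    case 1
    then have "0 < y'-z' \<and> 1/(y'-z') \<le> 1/(y-z) - 1" using qA[OF _ g] I p unfolding ty_def by auto
    moreover have "nxt_not v TypeB (Suc t)" using N2 I(3) 1 by blast
    ultimately have "InvY v (Suc t) (r-1)" using q I unfolding InvY_def by auto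
    then show ?thesis using 1 by simp
  next
    case 2
    then have "0 < z' \<and> 1/z' \<le> 1/(y-z)" using qC[OF _ g] I p unfolding ty_def by auto
    moreover have "nxt_not v TypeC (Suc t)" using N3[OF assms(1-3) 2] by simp
    ultimately have "InvZ v (Suc t) r" using q I unfolding InvZ_def by auto
    then show ?thesis using 2 by simp
  qed
qed

lemma two_step:
  assumes "tail_alternates v m" "m \<ge> 1" "m - 1 \<le> t" "InvZ v t r \<or> InvY v t r"
  shows "InvZ v (Suc (Suc t)) (r - 1) \<or> InvY v (Suc (Suc t)) (r - 1)"
proof -
  have t1: "m - 1 \<le> Suc t" using assms(3) by simp
  have gen: "InvZ v (Suc (Suc t)) (r - 1) \<or> InvY v (Suc (Suc t)) (r - 1)"
    if h: "InvZ v (Suc t) (r - 1) \<or> InvY v (Suc t) (r - 1)"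
  proof (cases "InvZ v (Suc t) (r - 1)")
    case True
    from SZ[OF assms(1,2) t1 True] show ?thesis
    proof
      assume "InvZ v (Suc (Suc t)) (r - 1 - 1)"
      then have "InvZ v (Suc (Suc t)) (r - 1)" by (rule InvZ_mono) simp
      then show ?thesis ..
    next
      assume "InvY v (Suc (Suc t)) (r - 1 - 1)"
      then have "InvY v (Suc (Suc t)) (r - 1)" by (rule InvY_mono) simp
      then show ?thesis ..
    qed
  next
    case False
    then have "InvY v (Suc t) (r-1)" using h by simp
    from SY[OF assms(1,2) t1 this] show ?thesis
    proof
      assume "ty v (Suc t) = TypeA \<and> InvY v (Suc (Suc t)) (r - 1 - 1)"
      then have "InvY v (Suc (Suc t)) (r - 1)" using InvY_mono[of v "Suc (Suc t)" "r-1-1" "r-1"] by simp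
      then show ?thesis ..
    next
      assume "ty v (Suc t) = TypeC \<and> InvZ v (Suc (Suc t)) (r - 1)"
      then show ?thesis by simp
    qed
  qed
  show ?thesis
  proof (cases "InvZ v t r")
    case True
    then show ?thesis using SZ[OF assms(1-3) True] gen by blast
  next
    case False
    then have Y: "InvY v t r" using assms(4) by simp
    from SY[OF assms(1-3) Y] show ?thesis
    proof
      assume "ty v t = TypeA \<and> InvY v (Suc t) (r - 1)"
      then show ?thesis using gen by blast
    next
      assume "ty v t = TypeC \<and> InvZ v (Suc t) r"
      then show ?thesis using SZ[OF assms(1,2) t1] by blast
    qed
  qed
qed

lemma iter:
  assumes "tail_alternates v m" "m \<ge> 1" "InvZ v (m-1) r \<or> InvY v (m-1) r"
  shows "InvZ v (m - 1 + 2*N) (r - real N) \<or> InvY v (m - 1 + 2*N) (r - real N)"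
proof (induction N)
  case 0 then show ?case using assms by simp
next
  case (Suc N)
  have e1: "m - 1 + 2 * Suc N = Suc (Suc (m - 1 + 2*N))" by simp
  have e2: "r - real (Suc N) = (r - real N) - 1" by simp
  show ?case unfolding e1 e2
    by (rule two_step[OF assms(1,2) _ Suc]) simp
qed

lemma Inv_pos: "InvZ v t r \<or> InvY v t r \<Longrightarrow> r > 0"
proof -
  assume "InvZ v t r \<or> InvY v t r"
  then obtain q :: real where "0 < q" "1/q \<le> r" unfolding InvZ_def InvY_def by blast
  moreover have "0 < 1/q" using \<open>0 < q\<close> by simp
  ultimately show ?thesis by linarith
qed

theorem mainTheorem17:
  fixes x y z :: real and m :: nat
  assumes "(x, y, z) \<in> simplexS"
    and "x \<notin> \<rat> \<or> y \<notin> \<rat> \<or> z \<notin> \<rat>"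
    and "m \<ge> 1"
    and "tail_alternates (x, y, z) m"
  shows "case (gaussG ^^ (m - 1)) (x, y, z) of (x', y', z') \<Rightarrow> z' = 0 \<or> y' = z'"
proof (rule ccontr)
  define v where "v = (x,y,z)"
  obtain a b c where p: "TT v (m-1) = (a,b,c)" by (cases "TT v (m-1)") auto
  assume "\<not> ?thesis"
  then have nz: "c \<noteq> 0" "b \<noteq> c" using p unfolding TT_def v_def by auto
  have "ty v (m-1) \<noteq> TypeO" using ty_ok[OF assms(4)[folded v_def] assms(3) order_refl] by auto
  then have "0 \<le> c \<and> c \<le> b" using qO p unfolding ty_def by auto
  then have pos: "0 < c" "0 < b - c" using nz by auto
  define r where "r = max (1/c) (1/(b-c))"
  have "nxt_not v TypeC (m-1) \<or> nxt_not v TypeB (m-1)"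
  proof (rule ccontr)
    assume "\<not> ?thesis"
    then obtain j1 j2 where j1: "j1 \<ge> m-1" "\<forall>l. m-1 \<le> l \<and> l < j1 \<longrightarrow> ty v l = TypeA" "ty v j1 = TypeC"
      and j2: "j2 \<ge> m-1" "\<forall>l. m-1 \<le> l \<and> l < j2 \<longrightarrow> ty v l = TypeA" "ty v j2 = TypeB"
      unfolding nxt_not_def by auto
    consider "j1 < j2" | "j2 < j1" | "j1 = j2" by linarith
    then show False
    proof cases
      case 1 then show ?thesis using j1 j2(2) by auto
    next
      case 2 then show ?thesis using j2 j1(2) by auto
    next
      case 3 then show ?thesis using j1 j2 by auto
    qed
  qed
  moreover have "1/c \<le> r" "1/(b-c) \<le> r" unfolding r_def by simp_all
  ultimately have "InvZ v (m-1) r \<or> InvY v (m-1) r"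
    using p pos unfolding InvZ_def InvY_def by simp
  note it = iter[OF assms(4)[folded v_def] assms(3) this]
  obtain N :: nat where N: "r < real N" using reals_Archimedean2 by blast
  have "r - real N > 0" by (rule Inv_pos[OF it[of N]])
  with N show False by simp
qed

end
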